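(* Let $U^{(1)},U^{(2)}$ be unitary operators on $\mathbb{C}^2\otimes\mathbb{C}^2$ (first factor the "environment", second the "system"), and define quantum channels on $\mathcal{M}_2(\mathbb{C})$ by $T_j(\rho)=\mathrm{tr}_E\big[U^{(j)}(|0\rangle\langle0|\otimes\rho)U^{(j)\dagger}\big]$ for $j=1,2$, where $\mathrm{tr}_E$ is the partial trace over the first factor, and let $T=\frac12T_1+\frac12T_2$. Let $U_k\in\mathrm{SU}(2)$ and let $|\psi\rangle,|\phi_1\rangle,|\phi_2\rangle\in\mathbb{C}^2$ be unit vectors. Consider five qubits ordered as (ancilla $a$, environment $E$, system $S$, $f_1$, $f_2$) prepared in $|+\rangle|0\rangle|\psi\rangle|\phi_1\rangle|\phi_2\rangle$ with $|+\rangle=\frac{1}{\sqrt2}(|0\rangle+|1\rangle)$, and apply in order: (i) $U_k$ on $S$; (ii) controlled on $a$ being $|1\rangle$, swap qubit $E$ with $f_1$ and qubit $S$ with $f_2$; (iii) $U^{(1)}$ on the pair $(E,S)$ and $U^{(2)}$ on the pair $(f_1,f_2)$ (first listed qubit as first tensor factor); (iv) again, controlled on $a$ being $|1\rangle$, swap $E$ with $f_1$ and $S$ with $f_2$; (v) $U_k^{\dagger}$ on $S$. Then the reduced density matrix of qubit $S$ of the final state (partial trace over $a,E,f_1,f_2$) equals $$U_k^{\dagger}\,T\big(U_k\rho U_k^{\dagger}\big)\,U_k=\tfrac12U_k^{\dagger}T_1(U_k\rho U_k^{\dagger})U_k+\tfrac12U_k^{\dagger}T_2(U_k\rho U_k^{\dagger})U_k,\qquad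 \rho=|\psi\rangle\langle\psi| .$$
   Context: In the paper, $T_1,T_2$ are specific quasi-extreme single-qubit channels with Stinespring unitaries $U^{(1)},U^{(2)}$ and $T$ is the channel $T_t^{(\theta_k)}$, so that the output is the constituent channel $T_t^{(k)}(\rho)=U_k^{\dagger}T_t^{(\theta_k)}(U_k\rho U_k^\dagger)U_k$; the statement above holds for arbitrary two-qubit unitaries as given. $\{|0\rangle,|1\rangle\}$ is the computational basis. *)

theory Defs
  imports Complex_Main "Jordan_Normal_Form.Schur_Decomposition" "Jordan_Normal_Form.Determinant"
begin

text \<open>Basis index convention for tensor products: index (i,k) of C^m (x) C^n is i*n+k,
  so the first listed factor is the most significant one.\<close>

definition unitary_mat :: "nat \<Rightarrow> complex mat \<Rightarrow> bool" where
  "unitary_mat n U \<longleftrightarrow> U \<in> carrier_mat n n \<and> mat_adjoint U * U = 1\<^sub>m n \<and> U * mat_adjoint U = 1\<^sub>m n"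

definition SU2 :: "complex mat \<Rightarrow> bool" where
  "SU2 U \<longleftrightarrow> unitary_mat 2 U \<and> det U = 1"

definition unit_vec2 :: "complex vec \<Rightarrow> bool" where
  "unit_vec2 v \<longleftrightarrow> v \<in> carrier_vec 2 \<and> (\<Sum>i<2. (cmod (v $ i))\<^sup>2) = 1"

definition kron :: "complex mat \<Rightarrow> complex mat \<Rightarrow> complex mat" where
  "kron A B = mat (dim_row A * dim_row B) (dim_col A * dim_col B)
     (\<lambda>(i,j). A $$ (i div dim_row B, j div dim_col B) * B $$ (i mod dim_row B, j mod dim_col B))"

definition kron_vec :: "complex vec \<Rightarrow> complex vec \<Rightarrow> complex vec" where
  "kron_vec v w = vec (dim_vec v * dim_vec w) (\<lambda>i. v $ (i div dim_vec w) * w $ (i mod dim_vec w))"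

definition ketbra :: "complex vec \<Rightarrow> complex mat" where
  "ketbra v = mat (dim_vec v) (dim_vec v) (\<lambda>(i,j). v $ i * cnj (v $ j))"

definition ket0 :: "complex vec" where "ket0 = vec 2 (\<lambda>i. if i = 0 then 1 else 0)"
definition ket1 :: "complex vec" where "ket1 = vec 2 (\<lambda>i. if i = 1 then 1 else 0)"
definition ket_plus :: "complex vec" where
  "ket_plus = vec 2 (\<lambda>i. complex_of_real (1 / sqrt 2))"

definition ptr1 :: "nat \<Rightarrow> nat \<Rightarrow> complex mat \<Rightarrow> complex mat" where
  "ptr1 m n A = mat n n (\<lambda>(i,j). \<Sum>k<m. A $$ (k*n + i, k*n + j))"

definition ptr2 :: "nat \<Rightarrow> nat \<Rightarrow> complex mat \<Rightarrow> complex mat" where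
  "ptr2 m n A = mat m m (\<lambda>(i,j). \<Sum>l<n. A $$ (i*n + l, j*n + l))"

text \<open>The swap operator on C^n (x) C^n: |x>|y> maps to |y>|x>.\<close>
definition swap_mat :: "nat \<Rightarrow> complex mat" where
  "swap_mat n = mat (n*n) (n*n) (\<lambda>(i,j). if i = (j mod n) * n + j div n then 1 else 0)"

definition stinespring_channel :: "complex mat \<Rightarrow> complex mat \<Rightarrow> complex mat" where
  "stinespring_channel U rho = ptr1 2 2 (U * kron (ketbra ket0) rho * mat_adjoint U)"

text \<open>The five-qubit circuit, qubits ordered (a, E, S, f1, f2).\<close>
definition gate_S :: "complex mat \<Rightarrow> complex mat" where
  "gate_S V = kron (1\<^sub>m 4) (kron V (1\<^sub>m 4))"

definition controlled_swap :: "complex mat" where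
  "controlled_swap = kron (ketbra ket0) (1\<^sub>m 16) + kron (ketbra ket1) (swap_mat 4)"

definition circuit :: "complex mat \<Rightarrow> complex mat \<Rightarrow> complex mat \<Rightarrow> complex mat" where
  "circuit U1 U2 Uk =
     gate_S (mat_adjoint Uk) * controlled_swap * kron (1\<^sub>m 2) (kron U1 U2)
       * controlled_swap * gate_S Uk"

definition initial_state :: "complex vec \<Rightarrow> complex vec \<Rightarrow> complex vec \<Rightarrow> complex vec" where
  "initial_state \<psi> \<phi>1 \<phi>2 =
     kron_vec ket_plus (kron_vec ket0 (kron_vec \<psi> (kron_vec \<phi>1 \<phi>2)))"

text \<open>Reduced density matrix of qubit S: trace out (a,E) (dimension 4) and (f1,f2) (dimension 4).\<close>
definition reduced_S :: "complex mat \<Rightarrow> complex mat" where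
  "reduced_S R = ptr2 2 4 (ptr1 4 8 R)"

end

theory Submission
  imports Defs
begin

lemma adj_dims[simp]: "dim_row (mat_adjoint A) = dim_col A" "dim_col (mat_adjoint A) = dim_row A"
  unfolding mat_adjoint_def by simp_all

lemma adj_index[simp]: "i < dim_col A \<Longrightarrow> j < dim_row A \<Longrightarrow> mat_adjoint (A::complex mat) $$ (i,j) = cnj (A $$ (j,i))"
  unfolding mat_adjoint_def mat_of_rows_def by (simp add: cols_def)

lemma adj_carrier[simp]: assumes "A \<in> carrier_mat n m" shows "mat_adjoint A \<in> carrier_mat m n"
  using carrier_matD[OF assms] by (intro carrier_matI) simp_all

lemma sum_split_idx: "(\<Sum>k<m*n. f k) = (\<Sum>a<m. \<Sum>b<n. f (a*n+b))" for f :: "nat \<Rightarrow> 'a::comm_monoid_add"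
proof (induction m)
  case 0 then show ?case by simp
next
  case (Suc m)
  have e: "{..<Suc m * n} = {..<m*n} \<union> {m*n..<m*n+n}" by auto
  have "(\<Sum>k<Suc m*n. f k) = (\<Sum>k<m*n. f k) + (\<Sum>k\<in>{m*n..<m*n+n}. f k)"
    unfolding e by (rule sum.union_disjoint) auto
  also have "(\<Sum>k\<in>{m*n..<m*n+n}. f k) = (\<Sum>b<n. f (m*n+b))"
    using sum.shift_bounds_nat_ivl[of f 0 "m*n" n] by (simp add: add.commute atLeast0LessThan)
  finally show ?case using Suc by simp
qed

lemma kron_dims[simp]: "dim_row (kron A B) = dim_row A * dim_row B" "dim_col (kron A B) = dim_col A * dim_col B"
  unfolding kron_def by auto

lemma kron_index[simp]: "i < dim_row A * dim_row B \<Longrightarrow> j < dim_col A * dim_col B \<Longrightarrow>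
  kron A B $$ (i,j) = A $$ (i div dim_row B, j div dim_col B) * B $$ (i mod dim_row B, j mod dim_col B)"
  unfolding kron_def by simp

lemma kron_vec_dim[simp]: "dim_vec (kron_vec v w) = dim_vec v * dim_vec w"
  unfolding kron_vec_def by simp

lemma kron_vec_index[simp]: "i < dim_vec v * dim_vec w \<Longrightarrow> kron_vec v w $ i = v $ (i div dim_vec w) * w $ (i mod dim_vec w)"
  unfolding kron_vec_def by simp

lemma kron_vec_carrier[simp]: assumes "v \<in> carrier_vec m" "w \<in> carrier_vec n" shows "kron_vec v w \<in> carrier_vec (m*n)"
  using carrier_vecD[OF assms(1)] carrier_vecD[OF assms(2)] by (intro carrier_vecI) simp

lemma kron_carrier[simp]: assumes "A \<in> carrier_mat m n" "B \<in> carrier_mat p q" shows "kron A B \<in> carrier_mat (m*p) (n*q)"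
  using carrier_matD[OF assms(1)] carrier_matD[OF assms(2)] by (intro carrier_matI) simp_all

lemma div_lt: "i < m * n \<Longrightarrow> i div n < (m::nat)"
  by (simp add: less_mult_imp_div_less)
lemma mod_lt: "i < m * n \<Longrightarrow> i mod n < (n::nat)"
  by (cases n) auto

lemma idx_lt: assumes "a < m" "b < (n::nat)" shows "a*n+b < m*n"
proof -
  have "a*n+b < a*n+n" using assms by simp
  also have "\<dots> = (a+1)*n" by simp
  also have "\<dots> \<le> m*n" using assms by (intro mult_right_mono) simp_all
  finally show ?thesis .
qed

lemma idx_div[simp]: "b < (n::nat) \<Longrightarrow> (a*n+b) div n = a"
  by simp
lemma idx_mod[simp]: "b < (n::nat) \<Longrightarrow> (a*n+b) mod n = b"
  by simp

lemma kron_mult_vec: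
  assumes "dim_vec x = dim_col A" "dim_vec y = dim_col B"
  shows "kron A B *\<^sub>v kron_vec x y = kron_vec (A *\<^sub>v x) (B *\<^sub>v y)"
proof (rule eq_vecI)
  show "dim_vec (kron A B *\<^sub>v kron_vec x y) = dim_vec (kron_vec (A *\<^sub>v x) (B *\<^sub>v y))" by simp
  fix i assume i: "i < dim_vec (kron_vec (A *\<^sub>v x) (B *\<^sub>v y))"
  then have i': "i < dim_row A * dim_row B" by simp
  have "(kron A B *\<^sub>v kron_vec x y) $ i = (\<Sum>k<dim_col A * dim_col B. kron A B $$ (i,k) * kron_vec x y $ k)"
    using i' assms by (simp add: scalar_prod_def row_def atLeast0LessThan)
  also have "\<dots> = (\<Sum>a<dim_col A. \<Sum>b<dim_col B. A $$ (i div dim_row B, a) * x $ a * (B $$ (i mod dim_row B, b) * y $ b))"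
    unfolding sum_split_idx using i' assms
  proof (intro sum.cong refl)
    fix a b assume a: "a \<in> {..<dim_col A}" and b: "b \<in> {..<dim_col B}"
    have lt: "a * dim_col B + b < dim_col A * dim_col B" using a b idx_lt by simp
    show "kron A B $$ (i, a * dim_col B + b) * kron_vec x y $ (a * dim_col B + b) =
      A $$ (i div dim_row B, a) * x $ a * (B $$ (i mod dim_row B, b) * y $ b)"
      using lt i' a b assms by (simp add: algebra_simps)
  qed
  also have "\<dots> = (\<Sum>a<dim_col A. A $$ (i div dim_row B, a) * x $ a) * (\<Sum>b<dim_col B. B $$ (i mod dim_row B, b) * y $ b)"
    by (simp add: sum_product)
  also have "\<dots> = kron_vec (A *\<^sub>v x) (B *\<^sub>v y) $ i"
    using i' assms div_lt[OF i'] mod_lt[OF i'] by (simp add: scalar_prod_def row_def atLeast0LessThan)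
  finally show "(kron A B *\<^sub>v kron_vec x y) $ i = kron_vec (A *\<^sub>v x) (B *\<^sub>v y) $ i" .
qed


lemma mod_prod_div: assumes "0 < (n::nat)" shows "(i mod (m*n)) div n = (i div n) mod m"
proof -
  have "i mod (m*n) = (i div n mod m) * n + i mod n" using mod_mult2_eq[of i n m] by (simp add: mult.commute)
  then show ?thesis using assms by simp
qed

lemma mod_prod_mod: "(i mod (m*n)) mod n = (i mod (n::nat))"
  by (metis mod_mod_cancel dvd_triv_right)

lemma div_prod: "i div (m*n) = i div n div (m::nat)"
  by (metis div_mult2_eq mult.commute)

lemma kron_vec_assoc:
  "kron_vec a (kron_vec b c) = kron_vec (kron_vec a b) c"
proof (rule eq_vecI)
  show "dim_vec (kron_vec a (kron_vec b c)) = dim_vec (kron_vec (kron_vec a b) c)" by simp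
  fix i assume "i < dim_vec (kron_vec (kron_vec a b) c)"
  then have i: "i < dim_vec a * (dim_vec b * dim_vec c)" by (simp add: mult.assoc)
  have "i div dim_vec c < dim_vec a * dim_vec b" using i by (simp add: mult.assoc div_lt)
  moreover have "i mod (dim_vec b * dim_vec c) < dim_vec b * dim_vec c" using i mod_lt by blast
  moreover have "0 < dim_vec c" using i by (cases "dim_vec c") simp_all
  moreover have "i < dim_vec a * dim_vec b * dim_vec c" using i by (simp add: mult.assoc)
  ultimately show "kron_vec a (kron_vec b c) $ i = kron_vec (kron_vec a b) c $ i"
    using i by (simp add: mod_prod_div mod_prod_mod div_prod)
qed

lemma kron_assoc:
  "kron A (kron B C) = kron (kron A B) C"
proof (rule eq_matI)
  fix i j assume "i < dim_row (kron (kron A B) C)" "j < dim_col (kron (kron A B) C)"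
  then have i: "i < dim_row A * (dim_row B * dim_row C)" and j: "j < dim_col A * (dim_col B * dim_col C)" by (simp_all add: mult.assoc)
  have "i div dim_row C < dim_row A * dim_row B" using i by (simp add: mult.assoc div_lt)
  moreover have "i mod (dim_row B * dim_row C) < dim_row B * dim_row C" using i mod_lt by blast
  moreover have "j div dim_col C < dim_col A * dim_col B" using j by (simp add: mult.assoc div_lt)
  moreover have "j mod (dim_col B * dim_col C) < dim_col B * dim_col C" using j mod_lt by blast
  moreover have "0 < dim_row C" using i by (cases "dim_row C") simp_all
  moreover have "0 < dim_col C" using j by (cases "dim_col C") simp_all
  moreover have "i < dim_row A * dim_row B * dim_row C" using i by (simp add: mult.assoc)
  moreover have "j < dim_col A * dim_col B * dim_col C" using j by (simp add: mult.assoc)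
  ultimately show "kron A (kron B C) $$ (i, j) = kron (kron A B) C $$ (i, j)"
    using i j by (simp add: mod_prod_div mod_prod_mod div_prod)
qed (simp_all add: mult.assoc)

lemma kron_one: "kron (1\<^sub>m m) (1\<^sub>m n) = 1\<^sub>m (m*n)"
proof (rule eq_matI)
  fix i j assume "i < dim_row (1\<^sub>m (m*n))" "j < dim_col (1\<^sub>m (m*n))"
  then have i: "i < m*n" and j: "j < m*n" by simp_all
  have "(i div n = j div n \<and> i mod n = j mod n) = (i = j)"
    by (metis div_mult_mod_eq)
  then show "kron (1\<^sub>m m) (1\<^sub>m n) $$ (i, j) = 1\<^sub>m (m*n) $$ (i, j)"
    using i j div_lt[OF i] div_lt[OF j] mod_lt[OF i] mod_lt[OF j] by auto
qed simp_all

lemma kron_vec_add: "dim_vec a = dim_vec b \<Longrightarrow> kron_vec (a + b) z = kron_vec a z + kron_vec b z"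
  by (rule eq_vecI) (simp_all add: algebra_simps div_lt)

lemma kron_vec_smult: "kron_vec (k \<cdot>\<^sub>v a) z = k \<cdot>\<^sub>v kron_vec a z"
  by (rule eq_vecI) (simp_all add: div_lt)

lemma kron_vec_zero: "kron_vec (0\<^sub>v n) z = 0\<^sub>v (n * dim_vec z)"
  by (rule eq_vecI) (simp_all add: div_lt)


lemma swap_mult_vec:
  assumes p: "p \<in> carrier_vec n" and q: "q \<in> carrier_vec n"
  shows "swap_mat n *\<^sub>v kron_vec p q = kron_vec q p"
proof (rule eq_vecI)
  show "dim_vec (swap_mat n *\<^sub>v kron_vec p q) = dim_vec (kron_vec q p)" using p q by (simp add: swap_mat_def)
  fix i assume "i < dim_vec (kron_vec q p)"
  then have i: "i < n * n" using p q by simp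
  have im: "i mod n < n" and id: "i div n < n" using i div_lt mod_lt by blast+
  have "(swap_mat n *\<^sub>v kron_vec p q) $ i = (\<Sum>j<n*n. swap_mat n $$ (i,j) * kron_vec p q $ j)"
    using i p q by (simp add: swap_mat_def scalar_prod_def row_def atLeast0LessThan)
  also have "\<dots> = (\<Sum>a<n. \<Sum>b<n. (if b = i div n then (if a = i mod n then p $ a * q $ b else 0) else 0))"
    unfolding sum_split_idx
  proof (intro sum.cong refl)
    fix a b assume a: "a \<in> {..<n}" and b: "b \<in> {..<n}"
    have lt: "a * n + b < n * n" using a b idx_lt by simp
    have "(i = b * n + a) = (a = i mod n \<and> b = i div n)"
      using a b by (metis div_mult_mod_eq idx_div idx_mod lessThan_iff)
    then show "swap_mat n $$ (i, a * n + b) * kron_vec p q $ (a * n + b) =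
      (if b = i div n then (if a = i mod n then p $ a * q $ b else 0) else 0)"
      using lt i a b p q by (simp add: swap_mat_def)
  qed
  also have "\<dots> = p $ (i mod n) * q $ (i div n)"
    using im id by (simp add: sum.delta')
  also have "\<dots> = kron_vec q p $ i" using i p q by simp
  finally show "(swap_mat n *\<^sub>v kron_vec p q) $ i = kron_vec q p $ i" .
qed

lemma ket0_carrier[simp]: "ket0 \<in> carrier_vec 2" and ket1_carrier[simp]: "ket1 \<in> carrier_vec 2"
  and ket_plus_carrier[simp]: "ket_plus \<in> carrier_vec 2"
  by (simp_all add: ket0_def ket1_def ket_plus_def)

lemma dims_kets[simp]: "dim_vec ket0 = 2" "dim_vec ket1 = 2" "dim_vec ket_plus = 2"
  by (simp_all add: ket0_def ket1_def ket_plus_def)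

lemma less2: "(i::nat) < 2 \<longleftrightarrow> i = 0 \<or> i = 1" by auto
lemma less4: "(i::nat) < 4 \<longleftrightarrow> i = 0 \<or> i = 1 \<or> i = 2 \<or> i = 3" by auto

lemma sum2: "(\<Sum>i<2. f i) = f 0 + f (1::nat)" by (simp add: numeral_2_eq_2)
lemma sum4: "(\<Sum>i<4. f i) = f 0 + f 1 + f 2 + f (3::nat)"
  by (simp add: eval_nat_numeral add.assoc)

lemma ketbra_kets:
  "ketbra ket0 *\<^sub>v ket0 = ket0" "ketbra ket0 *\<^sub>v ket1 = 0\<^sub>v 2"
  "ketbra ket1 *\<^sub>v ket0 = 0\<^sub>v 2" "ketbra ket1 *\<^sub>v ket1 = ket1"
  by (rule eq_vecI; simp add: ketbra_def ket0_def ket1_def scalar_prod_def row_def atLeast0LessThan sum2 less2; elim disjE; simp)+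

lemma ket_plus_eq: "ket_plus = complex_of_real (1 / sqrt 2) \<cdot>\<^sub>v (ket0 + ket1)"
  by (rule eq_vecI; simp add: ket_plus_def ket0_def ket1_def less2; elim disjE; simp)


lemma ketbra_carrier[simp]: "ketbra v \<in> carrier_mat (dim_vec v) (dim_vec v)"
  unfolding ketbra_def by simp

lemma ketbra_dims[simp]: "dim_row (ketbra v) = dim_vec v" "dim_col (ketbra v) = dim_vec v"
  unfolding ketbra_def by simp_all

lemma swap_dims[simp]: "dim_row (swap_mat n) = n*n" "dim_col (swap_mat n) = n*n"
  unfolding swap_mat_def by simp_all

lemma swap_carrier[simp]: "swap_mat n \<in> carrier_mat (n*n) (n*n)"
  unfolding swap_mat_def by simp

lemma cs_carriers: "kron (ketbra ket0) (1\<^sub>m 16) \<in> carrier_mat 32 32" "kron (ketbra ket1) (swap_mat 4) \<in> carrier_mat 32 32"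
  using kron_carrier[OF ketbra_carrier[of ket0] one_carrier_mat[of 16]]
    kron_carrier[OF ketbra_carrier[of ket1] swap_carrier[of 4]] by simp_all

lemma cs0: assumes Z: "Z \<in> carrier_vec 16" shows "controlled_swap *\<^sub>v kron_vec ket0 Z = kron_vec ket0 Z"
proof -
  have kc: "kron_vec ket0 Z \<in> carrier_vec 32" using kron_vec_carrier[OF ket0_carrier Z] by simp
  have dZ: "dim_vec Z = 16" using Z by simp
  have "controlled_swap *\<^sub>v kron_vec ket0 Z = kron (ketbra ket0) (1\<^sub>m 16) *\<^sub>v kron_vec ket0 Z + kron (ketbra ket1) (swap_mat 4) *\<^sub>v kron_vec ket0 Z"
    unfolding controlled_swap_def by (rule add_mult_distrib_mat_vec[OF cs_carriers kc])
  also have "\<dots> = kron_vec ket0 Z + kron_vec (0\<^sub>v 2) (swap_mat 4 *\<^sub>v Z)"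
    using dZ Z by (simp add: kron_mult_vec ketbra_kets)
  also have "\<dots> = kron_vec ket0 Z" using kc dZ by (simp add: kron_vec_zero)
  finally show ?thesis .
qed

lemma cs1: assumes p: "p \<in> carrier_vec 4" and q: "q \<in> carrier_vec 4"
  shows "controlled_swap *\<^sub>v kron_vec ket1 (kron_vec p q) = kron_vec ket1 (kron_vec q p)"
proof -
  have kc: "kron_vec ket1 (kron_vec p q) \<in> carrier_vec 32" using kron_vec_carrier[OF ket1_carrier kron_vec_carrier[OF p q]] by simp
  have dZ: "dim_vec (kron_vec p q) = 16" "dim_vec (kron_vec q p) = 16" using p q by simp_all
  have pq: "kron_vec p q \<in> carrier_vec 16" using kron_vec_carrier[OF p q] by simp
  have kc2: "kron_vec ket1 (kron_vec q p) \<in> carrier_vec 32" using kron_vec_carrier[OF ket1_carrier kron_vec_carrier[OF q p]] by simp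
  have "controlled_swap *\<^sub>v kron_vec ket1 (kron_vec p q) = kron (ketbra ket0) (1\<^sub>m 16) *\<^sub>v kron_vec ket1 (kron_vec p q) + kron (ketbra ket1) (swap_mat 4) *\<^sub>v kron_vec ket1 (kron_vec p q)"
    unfolding controlled_swap_def by (rule add_mult_distrib_mat_vec[OF cs_carriers kc])
  also have "\<dots> = kron_vec (0\<^sub>v 2) (kron_vec p q) + kron_vec ket1 (kron_vec q p)"
    using dZ p q pq by (simp add: kron_mult_vec ketbra_kets swap_mult_vec)
  also have "\<dots> = kron_vec ket1 (kron_vec q p)" using dZ p q kc2 by (simp add: kron_vec_zero)
  finally show ?thesis .
qed

lemma gateS: assumes k: "k \<in> carrier_vec 2" and p: "p \<in> carrier_vec 4" and q: "q \<in> carrier_vec 4"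
  and V: "V \<in> carrier_mat 2 2"
  shows "gate_S V *\<^sub>v kron_vec k (kron_vec p q) = kron_vec k (kron_vec (kron (1\<^sub>m 2) V *\<^sub>v p) q)"
proof -
  have "gate_S V = kron (kron (1\<^sub>m 2) (1\<^sub>m 2)) (kron V (1\<^sub>m 4))"
    unfolding gate_S_def kron_one by simp
  also have "\<dots> = kron (1\<^sub>m 2) (kron (kron (1\<^sub>m 2) V) (1\<^sub>m 4))"
    by (simp add: kron_assoc)
  finally have g: "gate_S V = kron (1\<^sub>m 2) (kron (kron (1\<^sub>m 2) V) (1\<^sub>m 4))" .
  show ?thesis unfolding g using k p q V by (simp add: kron_mult_vec)
qed

lemma gateK: assumes k: "k \<in> carrier_vec 2" and p: "p \<in> carrier_vec 4" and q: "q \<in> carrier_vec 4"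
  and U1: "U1 \<in> carrier_mat 4 4" and U2: "U2 \<in> carrier_mat 4 4"
  shows "kron (1\<^sub>m 2) (kron U1 U2) *\<^sub>v kron_vec k (kron_vec p q) = kron_vec k (kron_vec (U1 *\<^sub>v p) (U2 *\<^sub>v q))"
  using k p q U1 U2 by (simp add: kron_mult_vec)


lemma lin32: assumes M: "(M::complex mat) \<in> carrier_mat 32 32" and a: "a \<in> carrier_vec 32" and b: "b \<in> carrier_vec 32"
  shows "M *\<^sub>v (c \<cdot>\<^sub>v (a + b)) = c \<cdot>\<^sub>v (M *\<^sub>v a + M *\<^sub>v b)"
proof -
  have "a + b \<in> carrier_vec 32" using a b by simp
  then show ?thesis using mult_mat_vec[OF M] mult_add_distrib_mat_vec[OF M a b] by simp
qed

lemma kv3_carrier: "k \<in> carrier_vec 2 \<Longrightarrow> p \<in> carrier_vec 4 \<Longrightarrow> q \<in> carrier_vec 4 \<Longrightarrow> kron_vec k (kron_vec p q) \<in> carrier_vec 32"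
  using kron_vec_carrier[of k 2 "kron_vec p q" 16] kron_vec_carrier[of p 4 q 4] by simp

lemma gate_carrier: "V \<in> carrier_mat 2 2 \<Longrightarrow> gate_S V \<in> carrier_mat 32 32"
  unfolding gate_S_def using kron_carrier[of "1\<^sub>m 4" 4 4 "kron V (1\<^sub>m 4)" 8 8] kron_carrier[of V 2 2 "1\<^sub>m 4" 4 4] by simp

lemma cs_carrier: "controlled_swap \<in> carrier_mat 32 32"
  unfolding controlled_swap_def using cs_carriers by simp

lemma K_carrier: "U1 \<in> carrier_mat 4 4 \<Longrightarrow> U2 \<in> carrier_mat 4 4 \<Longrightarrow> kron (1\<^sub>m 2) (kron U1 U2) \<in> carrier_mat 32 32"
  using kron_carrier[of "1\<^sub>m 2" 2 2 "kron U1 U2" 16 16] kron_carrier[of U1 4 4 U2 4 4] by simp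

lemma final_vec:
  assumes U1: "U1 \<in> carrier_mat 4 4" and U2: "U2 \<in> carrier_mat 4 4" and Uk: "Uk \<in> carrier_mat 2 2"
    and \<psi>: "\<psi> \<in> carrier_vec 2" and \<phi>1: "\<phi>1 \<in> carrier_vec 2" and \<phi>2: "\<phi>2 \<in> carrier_vec 2"
  defines "x \<equiv> kron_vec ket0 (Uk *\<^sub>v \<psi>)" and "y \<equiv> kron_vec \<phi>1 \<phi>2" and "c \<equiv> complex_of_real (1 / sqrt 2)"
  shows "circuit U1 U2 Uk *\<^sub>v initial_state \<psi> \<phi>1 \<phi>2 =
    c \<cdot>\<^sub>v (kron_vec ket0 (kron_vec (kron (1\<^sub>m 2) (mat_adjoint Uk) *\<^sub>v (U1 *\<^sub>v x)) (U2 *\<^sub>v y))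
         + kron_vec ket1 (kron_vec (kron (1\<^sub>m 2) (mat_adjoint Uk) *\<^sub>v (U2 *\<^sub>v x)) (U1 *\<^sub>v y)))"
proof -
  let ?G = "gate_S Uk" and ?G' = "gate_S (mat_adjoint Uk)" and ?C = controlled_swap and ?K = "kron (1\<^sub>m 2) (kron U1 U2)"
  have Uk': "mat_adjoint Uk \<in> carrier_mat 2 2" using Uk by simp
  have cG: "?G \<in> carrier_mat 32 32" and cG': "?G' \<in> carrier_mat 32 32" and cC: "?C \<in> carrier_mat 32 32"
    and cK: "?K \<in> carrier_mat 32 32"
    using gate_carrier[OF Uk] gate_carrier[OF Uk'] cs_carrier K_carrier[OF U1 U2] by simp_all
  have x: "x \<in> carrier_vec 4" unfolding x_def using kron_vec_carrier[OF ket0_carrier mult_mat_vec_carrier[OF Uk \<psi>]] by simp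
  have y: "y \<in> carrier_vec 4" unfolding y_def using kron_vec_carrier[OF \<phi>1 \<phi>2] by simp
  have k0: "kron_vec ket0 \<psi> \<in> carrier_vec 4" using kron_vec_carrier[OF ket0_carrier \<psi>] by simp
  have i: "initial_state \<psi> \<phi>1 \<phi>2 \<in> carrier_vec 32"
    unfolding initial_state_def using kv3_carrier[OF ket_plus_carrier k0 y]
    by (simp add: kron_vec_assoc y_def)
  have "circuit U1 U2 Uk *\<^sub>v initial_state \<psi> \<phi>1 \<phi>2 = ?G' *\<^sub>v (?C *\<^sub>v (?K *\<^sub>v (?C *\<^sub>v (?G *\<^sub>v initial_state \<psi> \<phi>1 \<phi>2))))"
  proof -
    have m2: "?G' * ?C \<in> carrier_mat 32 32" using cG' cC by simp
    have m3: "?G' * ?C * ?K \<in> carrier_mat 32 32" using m2 cK by simp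
    have m4: "?G' * ?C * ?K * ?C \<in> carrier_mat 32 32" using m3 cC by simp
    have v1: "?G *\<^sub>v initial_state \<psi> \<phi>1 \<phi>2 \<in> carrier_vec 32" using cG i by simp
    have v2: "?C *\<^sub>v (?G *\<^sub>v initial_state \<psi> \<phi>1 \<phi>2) \<in> carrier_vec 32" using cC v1 by simp
    have v3: "?K *\<^sub>v (?C *\<^sub>v (?G *\<^sub>v initial_state \<psi> \<phi>1 \<phi>2)) \<in> carrier_vec 32" using cK v2 by simp
    have "circuit U1 U2 Uk *\<^sub>v initial_state \<psi> \<phi>1 \<phi>2 = (?G' * ?C * ?K * ?C * ?G) *\<^sub>v initial_state \<psi> \<phi>1 \<phi>2"
      unfolding circuit_def by simp
    also have "\<dots> = (?G' * ?C * ?K * ?C) *\<^sub>v (?G *\<^sub>v initial_state \<psi> \<phi>1 \<phi>2)"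
      by (rule assoc_mult_mat_vec[OF m4 cG i])
    also have "\<dots> = (?G' * ?C * ?K) *\<^sub>v (?C *\<^sub>v (?G *\<^sub>v initial_state \<psi> \<phi>1 \<phi>2))"
      by (rule assoc_mult_mat_vec[OF m3 cC v1])
    also have "\<dots> = (?G' * ?C) *\<^sub>v (?K *\<^sub>v (?C *\<^sub>v (?G *\<^sub>v initial_state \<psi> \<phi>1 \<phi>2)))"
      by (rule assoc_mult_mat_vec[OF m2 cK v2])
    also have "\<dots> = ?G' *\<^sub>v (?C *\<^sub>v (?K *\<^sub>v (?C *\<^sub>v (?G *\<^sub>v initial_state \<psi> \<phi>1 \<phi>2))))"
      by (rule assoc_mult_mat_vec[OF cG' cC v3])
    finally show ?thesis .
  qed
  also have "?G *\<^sub>v initial_state \<psi> \<phi>1 \<phi>2 = kron_vec ket_plus (kron_vec x y)"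
  proof -
    have "initial_state \<psi> \<phi>1 \<phi>2 = kron_vec ket_plus (kron_vec (kron_vec ket0 \<psi>) y)"
      unfolding initial_state_def y_def by (simp add: kron_vec_assoc)
    moreover have "kron (1\<^sub>m 2) Uk *\<^sub>v kron_vec ket0 \<psi> = x"
      unfolding x_def using Uk \<psi> by (simp add: kron_mult_vec)
    ultimately show ?thesis using gateS[OF ket_plus_carrier k0 y Uk] by simp
  qed
  also have "kron_vec ket_plus (kron_vec x y) = c \<cdot>\<^sub>v (kron_vec ket0 (kron_vec x y) + kron_vec ket1 (kron_vec x y))"
    unfolding ket_plus_eq c_def by (simp add: kron_vec_smult kron_vec_add)
  also have "?C *\<^sub>v \<dots> = c \<cdot>\<^sub>v (kron_vec ket0 (kron_vec x y) + kron_vec ket1 (kron_vec y x))"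
    using lin32[OF cC kv3_carrier[OF ket0_carrier x y] kv3_carrier[OF ket1_carrier x y]]
      cs0[OF kron_vec_carrier[of x 4 y 4, simplified, OF x y]] cs1[OF x y] by simp
  also have "?K *\<^sub>v \<dots> = c \<cdot>\<^sub>v (kron_vec ket0 (kron_vec (U1 *\<^sub>v x) (U2 *\<^sub>v y)) + kron_vec ket1 (kron_vec (U1 *\<^sub>v y) (U2 *\<^sub>v x)))"
    using lin32[OF cK kv3_carrier[OF ket0_carrier x y] kv3_carrier[OF ket1_carrier y x]]
      gateK[OF ket0_carrier x y U1 U2] gateK[OF ket1_carrier y x U1 U2] by simp
  also have "?C *\<^sub>v \<dots> = c \<cdot>\<^sub>v (kron_vec ket0 (kron_vec (U1 *\<^sub>v x) (U2 *\<^sub>v y)) + kron_vec ket1 (kron_vec (U2 *\<^sub>v x) (U1 *\<^sub>v y)))"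
  proof -
    have a: "U1 *\<^sub>v x \<in> carrier_vec 4" "U2 *\<^sub>v y \<in> carrier_vec 4" "U1 *\<^sub>v y \<in> carrier_vec 4" "U2 *\<^sub>v x \<in> carrier_vec 4"
      using U1 U2 x y by simp_all
    show ?thesis
      using lin32[OF cC kv3_carrier[OF ket0_carrier a(1,2)] kv3_carrier[OF ket1_carrier a(3,4)]]
        cs0[OF kron_vec_carrier[of _ 4 _ 4, simplified, OF a(1,2)]] cs1[OF a(3,4)] by simp
  qed
  also have "?G' *\<^sub>v \<dots> = c \<cdot>\<^sub>v (kron_vec ket0 (kron_vec (kron (1\<^sub>m 2) (mat_adjoint Uk) *\<^sub>v (U1 *\<^sub>v x)) (U2 *\<^sub>v y))
         + kron_vec ket1 (kron_vec (kron (1\<^sub>m 2) (mat_adjoint Uk) *\<^sub>v (U2 *\<^sub>v x)) (U1 *\<^sub>v y)))"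
  proof -
    have a: "U1 *\<^sub>v x \<in> carrier_vec 4" "U2 *\<^sub>v y \<in> carrier_vec 4" "U1 *\<^sub>v y \<in> carrier_vec 4" "U2 *\<^sub>v x \<in> carrier_vec 4"
      using U1 U2 x y by simp_all
    show ?thesis
      using lin32[OF cG' kv3_carrier[OF ket0_carrier a(1,2)] kv3_carrier[OF ket1_carrier a(4,3)]]
        gateS[OF ket0_carrier a(1,2) Uk'] gateS[OF ket1_carrier a(4,3) Uk'] by simp
  qed
  finally show ?thesis .
qed


lemma red_lemma:
  assumes P: "P \<in> carrier_vec 4" and Q: "Q \<in> carrier_vec 4" and P': "P' \<in> carrier_vec 4" and Q': "Q' \<in> carrier_vec 4"
  shows "reduced_S (ketbra (c \<cdot>\<^sub>v (kron_vec ket0 (kron_vec P Q) + kron_vec ket1 (kron_vec P' Q')))) =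
    mat 2 2 (\<lambda>(s,t). c * cnj c * ((\<Sum>e<2. P$(2*e+s) * cnj (P$(2*e+t))) * (\<Sum>l<4. Q$l * cnj (Q$l))
       + (\<Sum>e<2. P'$(2*e+s) * cnj (P'$(2*e+t))) * (\<Sum>l<4. Q'$l * cnj (Q'$l))))"
proof (rule eq_matI)
  have d: "dim_vec P = 4" "dim_vec Q = 4" "dim_vec P' = 4" "dim_vec Q' = 4" using P Q P' Q' by simp_all
  fix s t assume "s < dim_row (mat 2 2 (\<lambda>(s,t). c * cnj c * ((\<Sum>e<2. P$(2*e+s) * cnj (P$(2*e+t))) * (\<Sum>l<4. Q$l * cnj (Q$l))
       + (\<Sum>e<2. P'$(2*e+s) * cnj (P'$(2*e+t))) * (\<Sum>l<4. Q'$l * cnj (Q'$l)))))"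
    "t < dim_col (mat 2 2 (\<lambda>(s,t). c * cnj c * ((\<Sum>e<2. P$(2*e+s) * cnj (P$(2*e+t))) * (\<Sum>l<4. Q$l * cnj (Q$l))
       + (\<Sum>e<2. P'$(2*e+s) * cnj (P'$(2*e+t))) * (\<Sum>l<4. Q'$l * cnj (Q'$l)))))"
  then have st: "s = 0 \<or> s = 1" "t = 0 \<or> t = 1" by auto
  show "reduced_S (ketbra (c \<cdot>\<^sub>v (kron_vec ket0 (kron_vec P Q) + kron_vec ket1 (kron_vec P' Q')))) $$ (s, t) =
    mat 2 2 (\<lambda>(s,t). c * cnj c * ((\<Sum>e<2. P$(2*e+s) * cnj (P$(2*e+t))) * (\<Sum>l<4. Q$l * cnj (Q$l))
       + (\<Sum>e<2. P'$(2*e+s) * cnj (P'$(2*e+t))) * (\<Sum>l<4. Q'$l * cnj (Q'$l)))) $$ (s, t)"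
    using st d
    by (elim disjE; simp add: reduced_S_def ptr2_def ptr1_def sum4 sum2 ketbra_def ket0_def ket1_def; simp add: numeral_eq_Suc algebra_simps)
qed (simp_all add: reduced_S_def ptr2_def)


lemma mv_index: "A \<in> carrier_mat m n \<Longrightarrow> v \<in> carrier_vec n \<Longrightarrow> i < m \<Longrightarrow> (A *\<^sub>v v) $ i = (\<Sum>k<n. A $$ (i,k) * v $ k)"
  by (simp add: scalar_prod_def row_def atLeast0LessThan)

lemma mm_index: "A \<in> carrier_mat m n \<Longrightarrow> B \<in> carrier_mat n p \<Longrightarrow> i < m \<Longrightarrow> j < p \<Longrightarrow> (A * B) $$ (i,j) = (\<Sum>k<n. A $$ (i,k) * B $$ (k,j))"
  by (simp add: scalar_prod_def row_def col_def atLeast0LessThan)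

lemma ketbra_conj:
  assumes A: "(A::complex mat) \<in> carrier_mat m n" and v: "v \<in> carrier_vec n"
  shows "A * ketbra v * mat_adjoint A = ketbra (A *\<^sub>v v)"
proof (rule eq_matI)
  fix i j assume "i < dim_row (ketbra (A *\<^sub>v v))" "j < dim_col (ketbra (A *\<^sub>v v))"
  then have i: "i < m" and j: "j < m" using A by simp_all
  have K: "ketbra v \<in> carrier_mat n n" using v ketbra_carrier[of v] by simp
  have AK: "A * ketbra v \<in> carrier_mat m n" using A K by simp
  have A': "mat_adjoint A \<in> carrier_mat n m" using A by simp
  have "(A * ketbra v * mat_adjoint A) $$ (i,j) = (\<Sum>l<n. (A * ketbra v) $$ (i,l) * mat_adjoint A $$ (l,j))"
    by (rule mm_index[OF AK A' i j])
  also have "\<dots> = (\<Sum>l<n. (\<Sum>k<n. A $$ (i,k) * (v $ k * cnj (v $ l))) * cnj (A $$ (j,l)))"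
  proof (intro sum.cong refl)
    fix l assume l: "l \<in> {..<n}"
    have "(A * ketbra v) $$ (i,l) = (\<Sum>k<n. A $$ (i,k) * ketbra v $$ (k,l))"
      using l by (intro mm_index[OF A K i]) simp
    also have "\<dots> = (\<Sum>k<n. A $$ (i,k) * (v $ k * cnj (v $ l)))"
      using l v by (intro sum.cong refl) (simp add: ketbra_def)
    finally show "(A * ketbra v) $$ (i,l) * mat_adjoint A $$ (l,j) = (\<Sum>k<n. A $$ (i,k) * (v $ k * cnj (v $ l))) * cnj (A $$ (j,l))"
      using A l j by simp
  qed
  also have "\<dots> = (\<Sum>l<n. \<Sum>k<n. (A $$ (i,k) * v $ k) * (cnj (A $$ (j,l)) * cnj (v $ l)))"
    by (intro sum.cong refl) (simp add: sum_distrib_left sum_distrib_right mult_ac)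
  also have "\<dots> = (\<Sum>k<n. \<Sum>l<n. (A $$ (i,k) * v $ k) * (cnj (A $$ (j,l)) * cnj (v $ l)))"
    by (rule sum.swap)
  also have "\<dots> = (\<Sum>k<n. A $$ (i,k) * v $ k) * (\<Sum>l<n. cnj (A $$ (j,l)) * cnj (v $ l))"
    by (simp add: sum_product)
  also have "\<dots> = ketbra (A *\<^sub>v v) $$ (i,j)"
    using A v i j by (simp add: ketbra_def mv_index[OF A v] del: index_mult_mat_vec)
  finally show "(A * ketbra v * mat_adjoint A) $$ (i,j) = ketbra (A *\<^sub>v v) $$ (i,j)" .
qed (use A v in simp_all)

lemma kron_ketbra: "kron (ketbra a) (ketbra b) = ketbra (kron_vec a b)"
proof (rule eq_matI)
  fix i j assume "i < dim_row (ketbra (kron_vec a b))" "j < dim_col (ketbra (kron_vec a b))"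
  then have i: "i < dim_vec a * dim_vec b" and j: "j < dim_vec a * dim_vec b" by simp_all
  show "kron (ketbra a) (ketbra b) $$ (i,j) = ketbra (kron_vec a b) $$ (i,j)"
    using i j div_lt[OF i] div_lt[OF j] mod_lt[OF i] mod_lt[OF j] by (simp add: ketbra_def)
qed simp_all

lemma norm_pres:
  assumes U: "(U::complex mat) \<in> carrier_mat n n" and UU: "mat_adjoint U * U = 1\<^sub>m n" and y: "y \<in> carrier_vec n"
  shows "(\<Sum>l<n. (U *\<^sub>v y) $ l * cnj ((U *\<^sub>v y) $ l)) = (\<Sum>k<n. y $ k * cnj (y $ k))"
proof -
  have e: "(\<Sum>l<n. cnj (U $$ (l,m)) * U $$ (l,k)) = (if m = k then 1 else 0)" if m: "m < n" and k: "k < n" for m k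
  proof -
    have "(mat_adjoint U * U) $$ (m,k) = (\<Sum>l<n. mat_adjoint U $$ (m,l) * U $$ (l,k))"
      using U m k by (intro mm_index) simp_all
    also have "\<dots> = (\<Sum>l<n. cnj (U $$ (l,m)) * U $$ (l,k))"
      using U m by (intro sum.cong refl) simp
    finally show ?thesis using UU m k by simp
  qed
  have "(\<Sum>l<n. (U *\<^sub>v y) $ l * cnj ((U *\<^sub>v y) $ l)) = (\<Sum>l<n. (\<Sum>k<n. U $$ (l,k) * y $ k) * (\<Sum>m<n. cnj (U $$ (l,m)) * cnj (y $ m)))"
    using U y by (intro sum.cong refl) (simp add: mv_index[OF U y] del: index_mult_mat_vec)
  also have "\<dots> = (\<Sum>l<n. \<Sum>m<n. \<Sum>k<n. y $ k * cnj (y $ m) * (cnj (U $$ (l,m)) * U $$ (l,k)))"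
    by (intro sum.cong refl) (simp add: sum_product sum_distrib_left sum_distrib_right mult_ac)
  also have "\<dots> = (\<Sum>m<n. \<Sum>l<n. \<Sum>k<n. y $ k * cnj (y $ m) * (cnj (U $$ (l,m)) * U $$ (l,k)))"
    by (rule sum.swap)
  also have "\<dots> = (\<Sum>m<n. \<Sum>k<n. \<Sum>l<n. y $ k * cnj (y $ m) * (cnj (U $$ (l,m)) * U $$ (l,k)))"
    by (rule sum.cong[OF refl], rule sum.swap)
  also have "\<dots> = (\<Sum>m<n. \<Sum>k<n. y $ k * cnj (y $ m) * (\<Sum>l<n. cnj (U $$ (l,m)) * U $$ (l,k)))"
    by (simp add: sum_distrib_left)
  also have "\<dots> = (\<Sum>m<n. \<Sum>k<n. (if m = k then y $ k * cnj (y $ m) else 0))"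
    by (intro sum.cong refl) (simp add: e)
  also have "\<dots> = (\<Sum>k<n. y $ k * cnj (y $ k))" by simp
  finally show ?thesis .
qed

lemma unit_sum: assumes "unit_vec2 v" shows "(\<Sum>k<2. v $ k * cnj (v $ k)) = 1"
proof -
  have "(\<Sum>k<2. v $ k * cnj (v $ k)) = (\<Sum>k<2. complex_of_real ((cmod (v $ k))\<^sup>2))"
    by (intro sum.cong refl) (simp only: complex_norm_square)
  also have "\<dots> = complex_of_real (\<Sum>k<2. (cmod (v $ k))\<^sup>2)" by simp
  also have "\<dots> = 1" using assms unfolding unit_vec2_def by simp
  finally show ?thesis .
qed

lemma kron_unit: assumes a: "unit_vec2 a" and b: "unit_vec2 b"
  shows "(\<Sum>k<4. kron_vec a b $ k * cnj (kron_vec a b $ k)) = 1"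
proof -
  have d: "dim_vec a = 2" "dim_vec b = 2" using a b unfolding unit_vec2_def by simp_all
  have "(\<Sum>k<4. kron_vec a b $ k * cnj (kron_vec a b $ k)) = (\<Sum>k<2. a $ k * cnj (a $ k)) * (\<Sum>k<2. b $ k * cnj (b $ k))"
    using d by (simp add: sum4 sum2 algebra_simps)
  then show ?thesis using unit_sum[OF a] unit_sum[OF b] by simp
qed


lemma sum2': "(\<Sum>i\<in>{0..<2}. f i) = f 0 + f (1::nat)" by (simp add: atLeast0LessThan sum2)
lemma sum4': "(\<Sum>i\<in>{0..<4}. f i) = f 0 + f 1 + f 2 + f (3::nat)" by (simp add: atLeast0LessThan sum4)

lemma rhs_lemma:
  assumes Uk: "Uk \<in> carrier_mat 2 2" and p1: "p1 \<in> carrier_vec 4" and p2: "p2 \<in> carrier_vec 4"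
  shows "mat 2 2 (\<lambda>(s,t). 1/2 * ((\<Sum>e<2. (kron (1\<^sub>m 2) (mat_adjoint Uk) *\<^sub>v p1)$(2*e+s) * cnj ((kron (1\<^sub>m 2) (mat_adjoint Uk) *\<^sub>v p1)$(2*e+t)))
        + (\<Sum>e<2. (kron (1\<^sub>m 2) (mat_adjoint Uk) *\<^sub>v p2)$(2*e+s) * cnj ((kron (1\<^sub>m 2) (mat_adjoint Uk) *\<^sub>v p2)$(2*e+t)))))
    = mat_adjoint Uk * ((1/2) \<cdot>\<^sub>m ptr1 2 2 (ketbra p1) + (1/2) \<cdot>\<^sub>m ptr1 2 2 (ketbra p2)) * Uk"
  (is "?L = ?R")
proof (rule eq_matI)
  have d: "dim_row Uk = 2" "dim_col Uk = 2" "dim_vec p1 = 4" "dim_vec p2 = 4" using Uk p1 p2 by simp_all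
  fix s t assume "s < dim_row ?R" "t < dim_col ?R"
  then have st: "s = 0 \<or> s = 1" "t = 0 \<or> t = 1" using d by auto
  show "?L $$ (s,t) = ?R $$ (s,t)"
    using st d
    by (elim disjE; simp add: ptr1_def sum4 sum2 sum2' sum4' ketbra_def row_def col_def scalar_prod_def; simp add: numeral_eq_Suc field_simps)
qed (use Uk in simp_all)


lemma half: "complex_of_real (1 / sqrt 2) * cnj (complex_of_real (1 / sqrt 2)) = 1/2"
proof -
  have "(1 / sqrt 2) * (1 / sqrt 2) = (1/2::real)"
    by (simp add: power2_eq_square[symmetric] power_divide)
  then have "complex_of_real (1 / sqrt 2) * complex_of_real (1 / sqrt 2) = complex_of_real (1/2)"
    by (metis of_real_mult)
  then show ?thesis by simp
qed

theorem theorem5: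
  fixes U1 U2 Uk :: "complex mat" and \<psi> \<phi>1 \<phi>2 :: "complex vec"
  assumes "unitary_mat 4 U1" and "unitary_mat 4 U2" and "SU2 Uk"
    and "unit_vec2 \<psi>" and "unit_vec2 \<phi>1" and "unit_vec2 \<phi>2"
  shows "reduced_S (ketbra (circuit U1 U2 Uk *\<^sub>v initial_state \<psi> \<phi>1 \<phi>2)) =
    (let \<rho> = ketbra \<psi>;
         T = (\<lambda>X. (1/2 :: complex) \<cdot>\<^sub>m stinespring_channel U1 X + (1/2 :: complex) \<cdot>\<^sub>m stinespring_channel U2 X)
     in mat_adjoint Uk * T (Uk * \<rho> * mat_adjoint Uk) * Uk)"
proof -
  have U1: "U1 \<in> carrier_mat 4 4" and U1u: "mat_adjoint U1 * U1 = 1\<^sub>m 4"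
    using assms(1) unfolding unitary_mat_def by simp_all
  have U2: "U2 \<in> carrier_mat 4 4" and U2u: "mat_adjoint U2 * U2 = 1\<^sub>m 4"
    using assms(2) unfolding unitary_mat_def by simp_all
  have Uk: "Uk \<in> carrier_mat 2 2" using assms(3) unfolding SU2_def unitary_mat_def by simp
  have \<psi>: "\<psi> \<in> carrier_vec 2" and \<phi>1: "\<phi>1 \<in> carrier_vec 2" and \<phi>2: "\<phi>2 \<in> carrier_vec 2"
    using assms(4-6) unfolding unit_vec2_def by simp_all
  define x where "x = kron_vec ket0 (Uk *\<^sub>v \<psi>)"
  define y where "y = kron_vec \<phi>1 \<phi>2"
  define c where "c = complex_of_real (1 / sqrt 2)"
  have x: "x \<in> carrier_vec 4" unfolding x_def using kron_vec_carrier[OF ket0_carrier mult_mat_vec_carrier[OF Uk \<psi>]] by simp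
  have y: "y \<in> carrier_vec 4" unfolding y_def using kron_vec_carrier[OF \<phi>1 \<phi>2] by simp
  have Uk': "kron (1\<^sub>m 2) (mat_adjoint Uk) \<in> carrier_mat 4 4"
    using kron_carrier[OF one_carrier_mat[of 2] adj_carrier[OF Uk]] by simp
  have N1: "(\<Sum>l<4. (U1 *\<^sub>v y) $ l * cnj ((U1 *\<^sub>v y) $ l)) = 1"
    using norm_pres[OF U1 U1u y] kron_unit[OF assms(5,6)] unfolding y_def by simp
  have N2: "(\<Sum>l<4. (U2 *\<^sub>v y) $ l * cnj ((U2 *\<^sub>v y) $ l)) = 1"
    using norm_pres[OF U2 U2u y] kron_unit[OF assms(5,6)] unfolding y_def by simp
  have "reduced_S (ketbra (circuit U1 U2 Uk *\<^sub>v initial_state \<psi> \<phi>1 \<phi>2)) =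
    reduced_S (ketbra (c \<cdot>\<^sub>v (kron_vec ket0 (kron_vec (kron (1\<^sub>m 2) (mat_adjoint Uk) *\<^sub>v (U1 *\<^sub>v x)) (U2 *\<^sub>v y))
         + kron_vec ket1 (kron_vec (kron (1\<^sub>m 2) (mat_adjoint Uk) *\<^sub>v (U2 *\<^sub>v x)) (U1 *\<^sub>v y)))))"
    using final_vec[OF U1 U2 Uk \<psi> \<phi>1 \<phi>2] unfolding x_def y_def c_def by simp
  also have "\<dots> = mat 2 2 (\<lambda>(s,t). 1/2 * ((\<Sum>e<2. (kron (1\<^sub>m 2) (mat_adjoint Uk) *\<^sub>v (U1 *\<^sub>v x))$(2*e+s) * cnj ((kron (1\<^sub>m 2) (mat_adjoint Uk) *\<^sub>v (U1 *\<^sub>v x))$(2*e+t)))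
        + (\<Sum>e<2. (kron (1\<^sub>m 2) (mat_adjoint Uk) *\<^sub>v (U2 *\<^sub>v x))$(2*e+s) * cnj ((kron (1\<^sub>m 2) (mat_adjoint Uk) *\<^sub>v (U2 *\<^sub>v x))$(2*e+t)))))"
    apply (subst red_lemma)
    using Uk' U1 U2 x y N1 N2 half unfolding c_def by simp_all
  also have "\<dots> = mat_adjoint Uk * ((1/2) \<cdot>\<^sub>m ptr1 2 2 (ketbra (U1 *\<^sub>v x)) + (1/2) \<cdot>\<^sub>m ptr1 2 2 (ketbra (U2 *\<^sub>v x))) * Uk"
    using rhs_lemma[OF Uk mult_mat_vec_carrier[OF U1 x] mult_mat_vec_carrier[OF U2 x]] .
  also have "\<dots> = (let \<rho> = ketbra \<psi>;
         T = (\<lambda>X. (1/2 :: complex) \<cdot>\<^sub>m stinespring_channel U1 X + (1/2 :: complex) \<cdot>\<^sub>m stinespring_channel U2 X)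
     in mat_adjoint Uk * T (Uk * \<rho> * mat_adjoint Uk) * Uk)"
  proof -
    have r: "Uk * ketbra \<psi> * mat_adjoint Uk = ketbra (Uk *\<^sub>v \<psi>)" by (rule ketbra_conj[OF Uk \<psi>])
    have k: "kron (ketbra ket0) (ketbra (Uk *\<^sub>v \<psi>)) = ketbra x" unfolding x_def by (rule kron_ketbra)
    have s1: "stinespring_channel U1 (ketbra (Uk *\<^sub>v \<psi>)) = ptr1 2 2 (ketbra (U1 *\<^sub>v x))"
      unfolding stinespring_channel_def k using ketbra_conj[OF U1 x] by simp
    have s2: "stinespring_channel U2 (ketbra (Uk *\<^sub>v \<psi>)) = ptr1 2 2 (ketbra (U2 *\<^sub>v x))"
      unfolding stinespring_channel_def k using ketbra_conj[OF U2 x] by simp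
    show ?thesis unfolding Let_def r s1 s2 ..
  qed
  finally show ?thesis .
qed

end
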